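(* Every metrizable locally compact $J$-space has a countable base.
   Context: A topological space $X$ is a $J$-space if whenever $\{A,B\}$ is a cover of $X$ by closed sets with $A\cap B$ compact, then $A$ or $B$ is compact. *)

theory Defs
  imports "HOL-Analysis.Analysis"
begin

definition J_space :: "'a topology \<Rightarrow> bool" where
  "J_space X \<longleftrightarrow>
     (\<forall>A B. closedin X A \<and> closedin X B \<and> A \<union> B = topspace X \<and> compactin X (A \<inter> B)
        \<longrightarrow> compactin X A \<or> compactin X B)"

end

theory Submission
  imports Defs
begin

context Metric_space begin
lemma sigma_compact_imp_sc:
  assumes cK: "countable KK" and comp: "\<forall>K\<in>KK. compactin mtopology K" and un: "\<Union>KK = M"
  shows "second_countable mtopology"
proof -
  have "\<forall>K\<in>KK. \<forall>n::nat. \<exists>F. finite F \<and> F \<subseteq> K \<and> K \<subseteq> (\<Union>x\<in>F. mball x (1/Suc n))"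
    using comp compactin_imp_mtotally_bounded unfolding mtotally_bounded_def by simp
  then obtain F where F: "\<And>K n. K\<in>KK \<Longrightarrow> finite (F K n) \<and> F K n \<subseteq> K \<and> K \<subseteq> (\<Union>x\<in>F K n. mball x (1/Suc n))"
    by metis
  define C where "C = (\<Union>K\<in>KK. \<Union>n. F K n)"
  have cC: "countable C" unfolding C_def using cK F by (intro countable_UN) (auto intro: countable_finite)
  define B where "B = (\<lambda>(c,n::nat). mball c (1/Suc n)) ` (C \<times> UNIV)"
  show ?thesis unfolding second_countable_def
  proof (intro exI conjI ballI allI impI)
    show "countable B" unfolding B_def using cC by auto
    show "openin mtopology V" if "V \<in> B" for V using that unfolding B_def by auto
    fix U x assume Ux: "openin mtopology U \<and> x \<in> U"
    then obtain r where r: "r > 0" "mball x r \<subseteq> U" and xM: "x \<in> M" 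
      unfolding openin_mtopology by blast
    obtain n::nat where n: "1/Suc n < r/2"
      using r(1) by (metis half_gt_zero_iff nat_approx_posE of_nat_Suc)
    from xM un obtain K where K: "K \<in> KK" "x \<in> K" by blast
    with F[of K n] obtain c where c: "c \<in> F K n" "x \<in> mball c (1/Suc n)" by blast
    have cC': "c \<in> C" unfolding C_def using c K by blast
    have "mball c (1/Suc n) \<subseteq> mball x r"
    proof
      fix y assume "y \<in> mball c (1/Suc n)"
      then have "c \<in> M" "y \<in> M" "d c y < 1/Suc n" by auto
      moreover have "d x c < 1/Suc n" using c by (simp add: commute)
      ultimately show "y \<in> mball x r" using xM n triangle[of x c y] by auto
    qed
    then show "\<exists>V\<in>B. x \<in> V \<and> V \<subseteq> U" unfolding B_def using cC' c r
      by (intro bexI[of _ "mball c (1/Suc n)"]) auto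
  qed
qed
end

context Metric_space begin

definition crad where
  "crad x = Sup {s. 0 < s \<and> s \<le> 1 \<and> compactin mtopology (mcball x s)}"

lemma lc_ball:
  assumes lc: "locally_compact_space mtopology" and x: "x \<in> M"
  shows "\<exists>s. 0 < s \<and> s \<le> 1 \<and> compactin mtopology (mcball x s)"
proof -
  obtain U K where UK: "openin mtopology U" "compactin mtopology K" "x \<in> U" "U \<subseteq> K"
    using lc x unfolding locally_compact_space_def by auto
  then obtain e where e: "e > 0" "mball x e \<subseteq> U" unfolding openin_mtopology by blast
  define s where "s = min (e/2) 1"
  have "mcball x s \<subseteq> mball x e" using e x unfolding s_def by auto
  then have "compactin mtopology (mcball x s)"
    using UK e by (meson closed_compactin closedin_mcball order_trans)
  then show ?thesis using e by (intro exI[of _ s]) (auto simp: s_def)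
qed

lemma crad_props:
  assumes lc: "locally_compact_space mtopology" and x: "x \<in> M"
  shows "0 < crad x" "crad x \<le> 1"
    "\<And>s. 0 < s \<Longrightarrow> s < crad x \<Longrightarrow> compactin mtopology (mcball x s)"
proof -
  let ?S = "{s. 0 < s \<and> s \<le> 1 \<and> compactin mtopology (mcball x s)}"
  obtain s0 where s0: "s0 \<in> ?S" using lc_ball[OF lc x] by blast
  have ne: "?S \<noteq> {}" using s0 by blast
  have bdd: "bdd_above ?S" by (rule bdd_aboveI[of _ 1]) auto
  show "0 < crad x" unfolding crad_def using s0 cSup_upper[OF s0 bdd] by auto
  show "crad x \<le> 1" unfolding crad_def using ne by (intro cSup_least) auto
  fix s assume "0 < s" "s < crad x"
  then obtain t where t: "t \<in> ?S" "s < t" using less_cSupE[of s ?S] ne unfolding crad_def by blast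
  then show "compactin mtopology (mcball x s)"
    using closed_compactin[of mtopology "mcball x t" "mcball x s"] mcball_subset_concentric[of s t x] by auto
qed

lemma crad_lip:
  assumes lc: "locally_compact_space mtopology" and x: "x \<in> M" and y: "y \<in> M"
  shows "crad x \<le> crad y + d x y"
proof (rule ccontr)
  assume "\<not> ?thesis"
  then have lt: "crad y + d x y < crad x" by simp
  let ?S = "\<lambda>x. {s. 0 < s \<and> s \<le> 1 \<and> compactin mtopology (mcball x s)}"
  have ne: "?S x \<noteq> {}" using lc_ball[OF lc x] by blast
  obtain s where s: "s \<in> ?S x" "crad y + d x y < s"
    using less_cSupE[OF lt[unfolded crad_def[of x]] ne] by blast
  define t where "t = s - d x y"
  have ypos: "0 < crad y" using crad_props[OF lc y] by simp
  have "mcball y t \<subseteq> mcball x s"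
  proof
    fix z assume "z \<in> mcball y t"
    then have "z \<in> M" "d y z \<le> t" by auto
    then show "z \<in> mcball x s" using x y triangle[of x y z] unfolding t_def by auto
  qed
  moreover have "s \<le> 1" using s(1) by simp
  then have "t \<le> 1" using nonneg[of x y] unfolding t_def by linarith
  ultimately have "t \<in> ?S y" using s ypos unfolding t_def
    by (auto intro: closed_compactin[OF _ _ closedin_mcball])
  moreover have bdd: "bdd_above (?S y)" by (rule bdd_aboveI[of _ 1]) auto
  ultimately have "t \<le> crad y" unfolding crad_def by (rule cSup_upper)
  then show False using s unfolding t_def by simp
qed
end

locale LocCM = Metric_space + assumes lc: "locally_compact_space mtopology"
begin

definition stp where "stp x y \<longleftrightarrow> x \<in> M \<and> y \<in> M \<and> d x y < min (crad x) (crad y) / 2"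
definition cls where "cls x = {y. stp\<^sup>*\<^sup>* x y}"

lemma step_cover:
  assumes K: "compactin mtopology K"
  shows "\<exists>K'. compactin mtopology K' \<and> K \<union> {y. \<exists>x\<in>K. stp x y} \<subseteq> K'"
proof -
  have KM: "K \<subseteq> M" using compactin_subset_topspace[OF K] by simp
  let ?U = "(\<lambda>x. mball x (crad x/4)) ` K"
  have "K \<subseteq> \<Union>?U"
  proof
    fix x assume "x \<in> K"
    then show "x \<in> \<Union>?U" using KM crad_props(1)[OF lc, of x] by force
  qed
  moreover have "\<forall>U\<in>?U. openin mtopology U" by blast
  ultimately obtain FF where FF: "finite FF" "FF \<subseteq> ?U" "K \<subseteq> \<Union>FF"
    using K unfolding compactin_def by meson
  then obtain F where F: "F \<subseteq> K" "finite F" "FF = (\<lambda>x. mball x (crad x/4)) ` F"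
    by (meson finite_subset_image)
  define K' where "K' = K \<union> \<Union>((\<lambda>x. mcball x (7/8 * crad x)) ` F)"
  have "compactin mtopology K'" unfolding K'_def
  proof (intro compactin_Un[OF K] compactin_Union)
    show "finite ((\<lambda>x. mcball x (7/8 * crad x)) ` F)" using F by simp
    fix S assume "S \<in> (\<lambda>x. mcball x (7/8 * crad x)) ` F"
    then obtain x where x: "x \<in> F" "S = mcball x (7/8 * crad x)" by blast
    then have xM: "x \<in> M" using F KM by auto
    show "compactin mtopology S" unfolding x(2)
      using crad_props[OF lc xM] by (intro crad_props(3)[OF lc xM]) auto
  qed
  moreover have "{y. \<exists>x\<in>K. stp x y} \<subseteq> K'"
  proof
    fix y assume "y \<in> {y. \<exists>x\<in>K. stp x y}"
    then obtain x where x: "x \<in> K" "stp x y" by blast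
    then obtain xi where xi: "xi \<in> F" "x \<in> mball xi (crad xi/4)" using FF F by auto
    have M3: "x \<in> M" "y \<in> M" "xi \<in> M" using x xi unfolding stp_def by auto
    have l: "crad x \<le> crad xi + d x xi" by (rule crad_lip[OF lc M3(1) M3(3)])
    have dxy: "d x y < crad x / 2" using x(2) unfolding stp_def by auto
    have dxi: "d xi x < crad xi / 4" using xi by auto
    have "d xi y \<le> d xi x + d x y" using triangle M3 by blast
    moreover have "d x xi = d xi x" by (rule commute)
    ultimately have "d xi y \<le> 7/8 * crad xi" using l dxy dxi by linarith
    then have "y \<in> mcball xi (7/8 * crad xi)" using M3 by auto
    then show "y \<in> K'" unfolding K'_def using xi by blast
  qed
  ultimately show ?thesis unfolding K'_def by blast
qed

lemma stp_sym: "stp x y \<Longrightarrow> stp y x"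
  unfolding stp_def by (auto simp: commute min.commute)

lemma rt_sym: "stp\<^sup>*\<^sup>* x y \<Longrightarrow> stp\<^sup>*\<^sup>* y x"
proof (induction rule: rtranclp_induct)
  case base then show ?case by simp
next
  case (step y z) then show ?case
    using converse_rtranclp_into_rtranclp[of stp z y x] stp_sym by blast
qed

lemma rt_M: "stp\<^sup>*\<^sup>* x y \<Longrightarrow> x \<in> M \<Longrightarrow> y \<in> M"
  by (induction rule: rtranclp_induct) (auto simp: stp_def)

lemma cls_self: "x \<in> M \<Longrightarrow> x \<in> cls x" unfolding cls_def by simp

lemma cls_eq: "y \<in> cls x \<Longrightarrow> cls y = cls x"
proof -
  assume "y \<in> cls x"
  then have xy: "stp\<^sup>*\<^sup>* x y" unfolding cls_def by simp
  then have yx: "stp\<^sup>*\<^sup>* y x" by (rule rt_sym)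
  show "cls y = cls x" unfolding cls_def
    using rtranclp_trans[OF xy] rtranclp_trans[OF yx] by blast
qed

lemma cls_M: "x \<in> M \<Longrightarrow> cls x \<subseteq> M"
  unfolding cls_def using rt_M by blast

lemma cls_open:
  assumes x: "x \<in> M" shows "openin mtopology (cls x)"
  unfolding openin_mtopology
proof (intro conjI allI impI)
  show "cls x \<subseteq> M" using cls_M[OF x] .
  fix y assume y: "y \<in> cls x"
  then have yM: "y \<in> M" using cls_M[OF x] by auto
  have "mball y (crad y/4) \<subseteq> cls x"
  proof
    fix z assume z: "z \<in> mball y (crad y / 4)"
    then have zM: "z \<in> M" and dz: "d y z < crad y / 4" by auto
    have "crad y \<le> crad z + d y z" by (rule crad_lip[OF lc yM zM])
    moreover have "0 < crad y" using crad_props(1)[OF lc yM] .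
    ultimately have "stp y z" unfolding stp_def using yM zM dz by auto
    then show "z \<in> cls x" using y unfolding cls_def by auto
  qed
  then show "\<exists>r>0. mball y r \<subseteq> cls x" using crad_props(1)[OF lc yM]
    by (intro exI[of _ "crad y/4"]) auto
qed

lemma cls_sigma:
  assumes x: "x \<in> M"
  shows "\<exists>KK. countable KK \<and> (\<forall>K\<in>KK. compactin mtopology K) \<and> cls x \<subseteq> \<Union>KK"
proof -
  obtain nxt where nxt: "\<And>K. compactin mtopology K \<Longrightarrow>
      compactin mtopology (nxt K) \<and> K \<union> {y. \<exists>x\<in>K. stp x y} \<subseteq> nxt K"
    using step_cover by metis
  define Ks where "Ks k = (nxt ^^ k) {x}" for k
  have cK: "compactin mtopology (Ks k)" for k
    by (induction k) (auto simp: Ks_def x nxt)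
  have "\<exists>k. y \<in> Ks k" if "stp\<^sup>*\<^sup>* x y" for y
    using that
  proof (induction rule: rtranclp_induct)
    case base then show ?case by (intro exI[of _ 0]) (simp add: Ks_def)
  next
    case (step y z)
    then obtain k where "y \<in> Ks k" by blast
    then have "z \<in> Ks (Suc k)" using nxt[OF cK[of k]] step(2) by (auto simp: Ks_def)
    then show ?case by blast
  qed
  then have "cls x \<subseteq> \<Union>(range Ks)" unfolding cls_def by blast
  moreover have "\<forall>K\<in>range Ks. compactin mtopology K" using cK by blast
  moreover have "countable (range Ks)" by simp
  ultimately show ?thesis by blast
qed

lemma union_cls_closed:
  assumes D: "D \<subseteq> cls ` M"
  shows "M - \<Union>D = \<Union>(cls ` M - D)"
proof
  show "M - \<Union>D \<subseteq> \<Union>(cls ` M - D)"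
  proof
    fix y assume y: "y \<in> M - \<Union>D"
    then have "cls y \<notin> D" using cls_self by blast
    then show "y \<in> \<Union>(cls ` M - D)" using y cls_self by blast
  qed
  show "\<Union>(cls ` M - D) \<subseteq> M - \<Union>D"
  proof
    fix y assume "y \<in> \<Union>(cls ` M - D)"
    then obtain z where z: "z \<in> M" "y \<in> cls z" "cls z \<notin> D" by blast
    then have yM: "y \<in> M" using cls_M by blast
    have "y \<notin> \<Union>D"
    proof
      assume "y \<in> \<Union>D"
      then obtain w where w: "w \<in> M" "cls w \<in> D" "y \<in> cls w" using D by blast
      then have "cls w = cls z" using cls_eq z by metis
      then show False using w z by simp
    qed
    then show "y \<in> M - \<Union>D" using yM by blast
  qed
qed

lemma union_cls_open: "D \<subseteq> cls ` M \<Longrightarrow> openin mtopology (\<Union>D)"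
  using cls_open by (intro openin_Union) blast

lemma union_cls_sub: "D \<subseteq> cls ` M \<Longrightarrow> \<Union>D \<subseteq> M"
proof
  fix y assume D: "D \<subseteq> cls ` M" and "y \<in> \<Union>D"
  then obtain c where c: "c \<in> D" "y \<in> c" by blast
  then obtain x where "x \<in> M" "c = cls x" using D by blast
  then show "y \<in> M" using cls_M c by blast
qed

lemma union_cls_closedin:
  assumes D: "D \<subseteq> cls ` M" shows "closedin mtopology (\<Union>D)"
proof -
  have "openin mtopology (M - \<Union>D)"
    unfolding union_cls_closed[OF D] by (rule union_cls_open) blast
  then show ?thesis unfolding closedin_def using union_cls_sub[OF D] by simp
qed

lemma union_cls_noncompact:
  assumes D: "D \<subseteq> cls ` M" and inf: "infinite D"
  shows "\<not> compactin mtopology (\<Union>D)"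
proof
  assume c0: "compactin mtopology (\<Union>D)"
  have op: "\<forall>U\<in>D. openin mtopology U"
  proof
    fix U assume "U \<in> D"
    then obtain x where "x \<in> M" "U = cls x" using D by blast
    then show "openin mtopology U" using cls_open by simp
  qed
  have "\<forall>\<U>. (\<forall>U\<in>\<U>. openin mtopology U) \<and> \<Union>D \<subseteq> \<Union>\<U> \<longrightarrow>
          (\<exists>\<F>. finite \<F> \<and> \<F> \<subseteq> \<U> \<and> \<Union>D \<subseteq> \<Union>\<F>)"
    using c0 unfolding compactin_def by (rule conjunct2)
  then have H: "(\<forall>U\<in>D. openin mtopology U) \<and> \<Union>D \<subseteq> \<Union>D \<longrightarrow>
          (\<exists>F. finite F \<and> F \<subseteq> D \<and> \<Union>D \<subseteq> \<Union>F)" by (rule spec)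
  have "\<exists>F. finite F \<and> F \<subseteq> D \<and> \<Union>D \<subseteq> \<Union>F"
    by (rule mp[OF H conjI[OF op subset_refl]])
  then obtain F where F: "finite F" "F \<subseteq> D" "\<Union>D \<subseteq> \<Union>F" by (elim exE conjE)
  have "\<not> D \<subseteq> F" using inf F(1) finite_subset[of D F] by auto
  then obtain c where c: "c \<in> D" "c \<notin> F" by blast
  then obtain x where x: "x \<in> M" "c = cls x" using D by blast
  then have "x \<in> c" using cls_self by simp
  then have "x \<in> \<Union>F" using F(3) c(1) by blast
  then obtain c' where c': "c' \<in> F" "x \<in> c'" by blast
  then have "c' \<in> D" using F(2) by blast
  then obtain w where w: "c' = cls w" using D by blast
  have "x \<in> cls w" using c'(2) w by simp
  then have "cls x = cls w" by (rule cls_eq)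
  then have "c' = c" using w x by simp
  then show False using c c' by simp
qed

lemma finite_cls:
  assumes J: "\<forall>A B. closedin mtopology A \<and> closedin mtopology B \<and> A \<union> B = M \<and>
      compactin mtopology (A \<inter> B) \<longrightarrow> compactin mtopology A \<or> compactin mtopology B"
  shows "finite (cls ` M)"
proof (rule ccontr)
  assume "infinite (cls ` M)"
  then obtain f :: "nat \<Rightarrow> _" where f: "inj f" "range f \<subseteq> cls ` M"
    using infinite_countable_subset by blast
  define D1 where "D1 = range (\<lambda>n. f (2*n))"
  define D2 where "D2 = cls ` M - D1"
  have D1s: "D1 \<subseteq> cls ` M" using f unfolding D1_def by auto
  have D2s: "D2 \<subseteq> cls ` M" unfolding D2_def by auto
  have "inj (\<lambda>n::nat. 2*n)" by (simp add: inj_def)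
  from inj_compose[OF f(1) this] have i1: "inj (\<lambda>n. f (2*n))" by (simp add: comp_def)
  have "inj (\<lambda>n::nat. 2*n+1)" by (simp add: inj_def)
  from inj_compose[OF f(1) this] have i2: "inj (\<lambda>n. f (2*n+1))" by (simp add: comp_def)
  have inf1: "infinite D1" unfolding D1_def using range_inj_infinite[OF i1] .
  have "range (\<lambda>n. f (2*n+1)) \<subseteq> D2"
  proof
    fix c assume "c \<in> range (\<lambda>n. f (2*n+1))"
    then obtain n where n: "c = f (2*n+1)" by blast
    have "c \<notin> D1"
    proof
      assume "c \<in> D1"
      then obtain m where "c = f (2*m)" unfolding D1_def by blast
      then have "f (2*n+1) = f (2*m)" using n by simp
      then have "2*n+1 = 2*m" using f(1) by (simp add: inj_eq)
      then show False by presburger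
    qed
    moreover have "c \<in> cls ` M" using f(2) n by blast
    ultimately show "c \<in> D2" unfolding D2_def by blast
  qed
  then have inf2: "infinite D2" using range_inj_infinite[OF i2] finite_subset[of "range (\<lambda>n. f (2*n+1))" D2] by auto
  have eq: "\<Union>D2 = M - \<Union>D1" unfolding D2_def using union_cls_closed[OF D1s] by simp
  have sub: "\<Union>D1 \<subseteq> M" using union_cls_sub[OF D1s] .
  have u: "\<Union>D1 \<union> \<Union>D2 = M" using eq sub by blast
  have i: "\<Union>D1 \<inter> \<Union>D2 = {}" using eq by blast
  have "compactin mtopology (\<Union>D1) \<or> compactin mtopology (\<Union>D2)"
  proof -
    have c: "compactin mtopology (\<Union>D1 \<inter> \<Union>D2)" unfolding i by simp
    show ?thesis
      using union_cls_closedin[OF D1s] union_cls_closedin[OF D2s] u c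
      by (intro J[rule_format]) simp
  qed
  then show False using union_cls_noncompact[OF D1s inf1] union_cls_noncompact[OF D2s inf2] by blast
qed

end

theorem proposition1p3:
  fixes X :: "'a topology"
  assumes "metrizable_space X" and "locally_compact_space X" and "J_space X"
  shows "second_countable X"
proof -
  obtain M d where Md: "Metric_space M d" "X = Metric_space.mtopology M d"
    using assms(1) unfolding metrizable_space_def by blast
  have "LocCM M d" unfolding LocCM_def LocCM_axioms_def using Md assms(2) by simp
  then interpret LocCM M d .
  have J: "\<forall>A B. closedin mtopology A \<and> closedin mtopology B \<and> A \<union> B = M \<and>
      compactin mtopology (A \<inter> B) \<longrightarrow> compactin mtopology A \<or> compactin mtopology B"
    using assms(3) unfolding J_space_def Md(2) by simp
  have fin: "finite (cls ` M)" by (rule finite_cls[OF J])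
  have "\<forall>c\<in>cls ` M. \<exists>KK. countable KK \<and> (\<forall>K\<in>KK. compactin mtopology K) \<and> c \<subseteq> \<Union>KK"
  proof
    fix c assume "c \<in> cls ` M"
    then obtain x where x: "x \<in> M" "c = cls x" by blast
    show "\<exists>KK. countable KK \<and> (\<forall>K\<in>KK. compactin mtopology K) \<and> c \<subseteq> \<Union>KK"
      unfolding x(2) by (rule cls_sigma[OF x(1)])
  qed
  from bchoice[OF this] obtain H where
    H: "\<forall>c\<in>cls ` M. countable (H c) \<and> (\<forall>K\<in>H c. compactin mtopology K) \<and> c \<subseteq> \<Union>(H c)" ..
  define T where "T = \<Union>(H ` (cls ` M))"
  have cT: "countable T" unfolding T_def
  proof (rule countable_UN)
    show "countable (cls ` M)" using fin by (rule countable_finite)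
    fix c assume "c \<in> cls ` M" then show "countable (H c)" using H by blast
  qed
  have kT: "\<forall>K\<in>T. compactin mtopology K"
  proof
    fix K assume "K \<in> T"
    then obtain c where "c \<in> cls ` M" "K \<in> H c" unfolding T_def by blast
    then show "compactin mtopology K" using H by blast
  qed
  have "\<Union>T = M"
  proof
    show "\<Union>T \<subseteq> M"
    proof
      fix y assume "y \<in> \<Union>T"
      then obtain K where "K \<in> T" "y \<in> K" by blast
      then show "y \<in> M" using kT compactin_subset_topspace[of mtopology K] by auto
    qed
    show "M \<subseteq> \<Union>T"
    proof
      fix y assume y: "y \<in> M"
      then have c: "y \<in> cls y" "cls y \<in> cls ` M" using cls_self by auto
      then have "y \<in> \<Union>(H (cls y))" using H by blast
      then show "y \<in> \<Union>T" unfolding T_def using c(2) by blast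
    qed
  qed
  then have "second_countable mtopology" using sigma_compact_imp_sc cT kT by blast
  then show ?thesis using Md(2) by simp
qed

end
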